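(* Let $X$ be a proper geodesic $\delta$-hyperbolic space, $\xi\in\partial X$, $S$ a horosphere centered at $\xi$ and $B$ the (open) horoball bounded by $S$. There is a constant $C$ depending only on $\delta$ such that for every $p,q\in S$ and every path $c$ in $X\setminus B$ joining $p$ and $q$, the length of $c$ satisfies $\ell(c)\ge 2^{\frac{d(p,q)-C-2}{2\delta}}-C$.
   Context: A Busemann function $b$ centered at $\xi$ is $b(x)=\lim_{t\to\infty}(d(x,\gamma(t))-t)$ for a geodesic ray $\gamma$ converging to $\xi$; a horosphere centered at $\xi$ is a level set $S=\{b=b_0\}$ and the horoball bounded by it is $B=\{b<b_0\}$ (the side containing points close to $\xi$). *)

theory Defs
  imports "HOL-Analysis.Analysis"
begin

definition proper_mspace :: "'a set \<Rightarrow> ('a \<Rightarrow> 'a \<Rightarrow> real) \<Rightarrow> bool" where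
  "proper_mspace M d \<longleftrightarrow>
     (\<forall>x\<in>M. \<forall>r. compactin (Metric_space.mtopology M d) (Metric_space.mcball M d x r))"

definition geodesic_seg :: "'a set \<Rightarrow> ('a \<Rightarrow> 'a \<Rightarrow> real) \<Rightarrow> (real \<Rightarrow> 'a) \<Rightarrow> 'a \<Rightarrow> 'a \<Rightarrow> bool" where
  "geodesic_seg M d g x y \<longleftrightarrow>
     g 0 = x \<and> g (d x y) = y \<and> g ` {0..d x y} \<subseteq> M \<and>
     (\<forall>s\<in>{0..d x y}. \<forall>t\<in>{0..d x y}. d (g s) (g t) = \<bar>s - t\<bar>)"

definition geodesic_mspace :: "'a set \<Rightarrow> ('a \<Rightarrow> 'a \<Rightarrow> real) \<Rightarrow> bool" where
  "geodesic_mspace M d \<longleftrightarrow> (\<forall>x\<in>M. \<forall>y\<in>M. \<exists>g. geodesic_seg M d g x y)"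

definition delta_hyperbolic :: "'a set \<Rightarrow> ('a \<Rightarrow> 'a \<Rightarrow> real) \<Rightarrow> real \<Rightarrow> bool" where
  "delta_hyperbolic M d \<delta> \<longleftrightarrow>
     (\<forall>x\<in>M. \<forall>y\<in>M. \<forall>z\<in>M. \<forall>gxy gyz gxz.
        geodesic_seg M d gxy x y \<and> geodesic_seg M d gyz y z \<and> geodesic_seg M d gxz x z \<longrightarrow>
        (\<forall>p\<in>gxy ` {0..d x y}. \<exists>q\<in>gyz ` {0..d y z} \<union> gxz ` {0..d x z}. d p q \<le> \<delta>))"

definition geodesic_ray :: "'a set \<Rightarrow> ('a \<Rightarrow> 'a \<Rightarrow> real) \<Rightarrow> (real \<Rightarrow> 'a) \<Rightarrow> bool" where
  "geodesic_ray M d \<gamma> \<longleftrightarrow>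
     \<gamma> ` {0..} \<subseteq> M \<and> (\<forall>s\<ge>0. \<forall>t\<ge>0. d (\<gamma> s) (\<gamma> t) = \<bar>s - t\<bar>)"

definition busemann :: "('a \<Rightarrow> 'a \<Rightarrow> real) \<Rightarrow> (real \<Rightarrow> 'a) \<Rightarrow> 'a \<Rightarrow> real" where
  "busemann d \<gamma> x = Lim at_top (\<lambda>t. d x (\<gamma> t) - t)"

definition horosphere :: "'a set \<Rightarrow> ('a \<Rightarrow> 'a \<Rightarrow> real) \<Rightarrow> (real \<Rightarrow> 'a) \<Rightarrow> real \<Rightarrow> 'a set" where
  "horosphere M d \<gamma> b0 = {x\<in>M. busemann d \<gamma> x = b0}"

definition horoball :: "'a set \<Rightarrow> ('a \<Rightarrow> 'a \<Rightarrow> real) \<Rightarrow> (real \<Rightarrow> 'a) \<Rightarrow> real \<Rightarrow> 'a set" where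
  "horoball M d \<gamma> b0 = {x\<in>M. busemann d \<gamma> x < b0}"

definition mpath :: "'a set \<Rightarrow> ('a \<Rightarrow> 'a \<Rightarrow> real) \<Rightarrow> (real \<Rightarrow> 'a) \<Rightarrow> bool" where
  "mpath M d c \<longleftrightarrow>
     continuous_map (top_of_set {0..1}) (Metric_space.mtopology M d) c"

definition mpath_length :: "('a \<Rightarrow> 'a \<Rightarrow> real) \<Rightarrow> (real \<Rightarrow> 'a) \<Rightarrow> ereal" where
  "mpath_length d c =
     (SUP (n, t) \<in> {(n, t). t 0 = (0::real) \<and> t n = 1 \<and> (\<forall>i<n. t i \<le> t (Suc i))}.
        ereal (\<Sum>i<n. d (c (t i)) (c (t (Suc i)))))"

end

theory Submission
  imports Defs
begin

lemma unif_cont: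
  assumes "Metric_space M d" "continuous_map (top_of_set {0..1::real}) (Metric_space.mtopology M d) c"
  shows "\<exists>\<eta>>0. \<forall>x\<in>{0..1}. \<forall>y\<in>{0..1}. dist y x < \<eta> \<longrightarrow> d (c y) (c x) < 1"
proof -
  interpret Metric_space M d by fact
  have t: "mtopology_of (submetric euclidean_metric {0..1::real}) = top_of_set {0..1}"
    by (simp add: mtopology_of_submetric)
  have "compact_space (top_of_set {0..1::real})"
    by (simp add: compact_space_subtopology)
  then have "uniformly_continuous_map (submetric euclidean_metric {0..1::real}) (metric (M,d)) c"
    using assms(2) t by (intro continuous_imp_uniformly_continuous_map) simp
  then show ?thesis unfolding uniformly_continuous_map_def
    by (auto dest!: spec[of _ 1])
qed

lemma dec_conv:
  fixes f :: "real \<Rightarrow> real"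
  assumes mono: "\<And>s t. 0 \<le> s \<Longrightarrow> s \<le> t \<Longrightarrow> f t \<le> f s" and bd: "\<And>t. 0 \<le> t \<Longrightarrow> B \<le> f t"
  shows "(f \<longlongrightarrow> Inf (f ` {0..})) at_top"
proof (rule order_tendstoI)
  let ?L = "Inf (f ` {0..})"
  have bdd: "bdd_below (f ` {0..})" using bd by (auto intro!: bdd_belowI)
  fix a assume "a < ?L"
  then show "eventually (\<lambda>t. a < f t) at_top"
    using cInf_lower[OF _ bdd] unfolding eventually_at_top_linorder
    by (intro exI[of _ 0]) (metis atLeast_iff image_eqI less_le_trans)
next
  let ?L = "Inf (f ` {0..})"
  have bdd: "bdd_below (f ` {0..})" using bd by (auto intro!: bdd_belowI)
  fix a assume "?L < a"
  then obtain t0 where t0: "t0 \<ge> 0" "f t0 < a"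
    using cInf_lessD[of "f ` {0..}" a] by auto
  then show "eventually (\<lambda>t. f t < a) at_top"
    unfolding eventually_at_top_linorder
    by (intro exI[of _ t0]) (meson mono le_less_trans)
qed

lemma busemann_tendsto:
  assumes "Metric_space M d" "geodesic_ray M d \<gamma>" "x \<in> M"
  shows "((\<lambda>t. d x (\<gamma> t) - t) \<longlongrightarrow> busemann d \<gamma> x) at_top"
proof -
  interpret Metric_space M d by fact
  have g: "\<And>t. t \<ge> 0 \<Longrightarrow> \<gamma> t \<in> M" "\<And>s t. s \<ge> 0 \<Longrightarrow> t \<ge> 0 \<Longrightarrow> d (\<gamma> s) (\<gamma> t) = \<bar>s - t\<bar>"
    using assms(2) unfolding geodesic_ray_def by auto
  have "((\<lambda>t. d x (\<gamma> t) - t) \<longlongrightarrow> Inf ((\<lambda>t. d x (\<gamma> t) - t) ` {0..})) at_top"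
  proof (rule dec_conv)
    fix s t :: real assume st: "0 \<le> s" "s \<le> t"
    have "d x (\<gamma> t) \<le> d x (\<gamma> s) + d (\<gamma> s) (\<gamma> t)" by (rule triangle) (use assms(3) g st in auto)
    then show "d x (\<gamma> t) - t \<le> d x (\<gamma> s) - s" using g(2)[of s t] st by simp
  next
    fix t :: real assume t: "0 \<le> t"
    have "d (\<gamma> 0) (\<gamma> t) \<le> d (\<gamma> 0) x + d x (\<gamma> t)" by (rule triangle) (use assms(3) g t in auto)
    then show "- d (\<gamma> 0) x \<le> d x (\<gamma> t) - t" using g(2)[of 0 t] t by simp
  qed
  then show ?thesis unfolding busemann_def using tendsto_Lim by (metis trivial_limit_at_top_linorder)
qed

lemma busemann_lip:
  assumes "Metric_space M d" "geodesic_ray M d \<gamma>" "x \<in> M" "y \<in> M"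
  shows "busemann d \<gamma> y \<le> busemann d \<gamma> x + d x y"
proof -
  interpret Metric_space M d by fact
  have g: "\<And>t. t \<ge> 0 \<Longrightarrow> \<gamma> t \<in> M"
    using assms(2) unfolding geodesic_ray_def by auto
  have "((\<lambda>t. d x (\<gamma> t) - t + d x y) \<longlongrightarrow> busemann d \<gamma> x + d x y) at_top"
    by (intro tendsto_intros busemann_tendsto[OF assms(1,2,3)])
  moreover have "eventually (\<lambda>t. d y (\<gamma> t) - t \<le> d x (\<gamma> t) - t + d x y) at_top"
    unfolding eventually_at_top_linorder
    apply (intro exI[of _ 0] allI impI)
    using triangle[of y x] g assms(3,4) commute by (smt (verit))
  ultimately show ?thesis
    using busemann_tendsto[OF assms(1,2,4)] tendsto_le[OF trivial_limit_at_top_linorder] by blast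
qed

lemma geo_facts:
  assumes "geodesic_seg M d g x y" "s \<in> {0..d x y}"
  shows "g s \<in> M" "d x (g s) = s" "d (g s) y = d x y - s"
proof -
  have L: "0 \<le> d x y" using assms(2) by auto
  show "g s \<in> M" using assms unfolding geodesic_seg_def by auto
  have iso: "\<forall>s\<in>{0..d x y}. \<forall>t\<in>{0..d x y}. d (g s) (g t) = \<bar>s - t\<bar>"
    using assms(1) unfolding geodesic_seg_def by blast
  have "d (g 0) (g s) = \<bar>0 - s\<bar>" using iso assms(2) L by simp
  then show "d x (g s) = s" using assms unfolding geodesic_seg_def by auto
  have "d (g s) (g (d x y)) = \<bar>s - d x y\<bar>" using iso assms(2) L by simp
  then show "d (g s) y = d x y - s" using assms unfolding geodesic_seg_def by auto
qed

lemma hyp_use: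
  assumes "delta_hyperbolic M d \<delta>" "x \<in> M" "y \<in> M" "z \<in> M"
    "geodesic_seg M d gxy x y" "geodesic_seg M d gyz y z" "geodesic_seg M d gxz x z"
    "p \<in> gxy ` {0..d x y}"
  shows "\<exists>q\<in>gyz ` {0..d y z} \<union> gxz ` {0..d x z}. d p q \<le> \<delta>"
  using assms(1)[unfolded delta_hyperbolic_def, rule_format, OF assms(2,3,4) conjI[OF assms(5) conjI[OF assms(6,7)]] assms(8)] .

lemma busemann_mid:
  assumes ms: "Metric_space M d" and ray: "geodesic_ray M d \<gamma>" and hyp: "delta_hyperbolic M d \<delta>"
    and geo: "geodesic_mspace M d" and pq: "p \<in> M" "q \<in> M" and g: "geodesic_seg M d g p q"
    and bp: "busemann d \<gamma> p = b0" and bq: "busemann d \<gamma> q = b0"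
  shows "busemann d \<gamma> (g (d p q / 2)) \<le> b0 - d p q / 2 + 2 * \<delta>"
proof -
  interpret Metric_space M d by fact
  define D where "D = d p q"
  define m where "m = g (D/2)"
  have D0: "D \<ge> 0" unfolding D_def by simp
  have mseg: "D/2 \<in> {0..d p q}" using D0 unfolding D_def by auto
  have mM: "m \<in> M" "d p m = D/2" "d m q = D/2"
    using geo_facts[OF g mseg] unfolding m_def D_def by auto
  have gr: "\<And>t. t \<ge> 0 \<Longrightarrow> \<gamma> t \<in> M"
    using ray unfolding geodesic_ray_def by auto
  have key: "d m (\<gamma> t) - t \<le> max (d p (\<gamma> t) - t) (d q (\<gamma> t) - t) - D/2 + 2*\<delta>" if t: "t \<ge> 0" for t
  proof -
    have z: "\<gamma> t \<in> M" using gr t .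
    obtain gp where gp: "geodesic_seg M d gp p (\<gamma> t)" using geo pq z unfolding geodesic_mspace_def by blast
    obtain gq where gq: "geodesic_seg M d gq q (\<gamma> t)" using geo pq z unfolding geodesic_mspace_def by blast
    have "m \<in> g ` {0..d p q}" using mseg unfolding m_def D_def by auto
    then obtain w where w: "w \<in> gq ` {0..d q (\<gamma> t)} \<union> gp ` {0..d p (\<gamma> t)}" "d m w \<le> \<delta>"
    proof -
      show ?thesis using hyp_use[OF hyp pq z g gq gp \<open>m \<in> g ` {0..d p q}\<close>] that by blast
    qed
    from w(1) show ?thesis
    proof
      assume "w \<in> gq ` {0..d q (\<gamma> t)}"
      then obtain s where s: "s \<in> {0..d q (\<gamma> t)}" "w = gq s" by auto
      have wf: "w \<in> M" "d q w = s" "d w (\<gamma> t) = d q (\<gamma> t) - s" using geo_facts[OF gq s(1)] s(2) by auto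
      have "d q m \<le> d q w + d w m" using triangle[of q w m] pq mM wf by simp
      moreover have "d m (\<gamma> t) \<le> d m w + d w (\<gamma> t)" using triangle[of m w "\<gamma> t"] z mM wf by simp
      moreover have "d q m = D/2" "d w m = d m w" using mM commute by auto
      ultimately show ?thesis using w(2) wf by linarith
    next
      assume "w \<in> gp ` {0..d p (\<gamma> t)}"
      then obtain s where s: "s \<in> {0..d p (\<gamma> t)}" "w = gp s" by auto
      have wf: "w \<in> M" "d p w = s" "d w (\<gamma> t) = d p (\<gamma> t) - s" using geo_facts[OF gp s(1)] s(2) by auto
      have "d p m \<le> d p w + d w m" using triangle[of p w m] pq mM wf by simp
      moreover have "d m (\<gamma> t) \<le> d m w + d w (\<gamma> t)" using triangle[of m w "\<gamma> t"] z mM wf by simp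
      moreover have "d w m = d m w" using commute by auto
      ultimately show ?thesis using w(2) wf mM by linarith
    qed
  qed
  have "((\<lambda>t. max (d p (\<gamma> t) - t) (d q (\<gamma> t) - t) - D/2 + 2*\<delta>) \<longlongrightarrow> max b0 b0 - D/2 + 2*\<delta>) at_top"
    using busemann_tendsto[OF ms ray pq(1)] busemann_tendsto[OF ms ray pq(2)] bp bq
    by (intro tendsto_intros) auto
  moreover have "eventually (\<lambda>t. d m (\<gamma> t) - t \<le> max (d p (\<gamma> t) - t) (d q (\<gamma> t) - t) - D/2 + 2*\<delta>) at_top"
    unfolding eventually_at_top_linorder using key by blast
  ultimately have "busemann d \<gamma> m \<le> max b0 b0 - D/2 + 2*\<delta>"
    using busemann_tendsto[OF ms ray mM(1)] tendsto_le[OF trivial_limit_at_top_linorder] by blast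
  then show ?thesis unfolding m_def D_def by simp
qed

lemma geo_rev:
  assumes "Metric_space M d" "geodesic_seg M d g x y"
  shows "geodesic_seg M d (\<lambda>t. g (d x y - t)) y x"
    "(\<lambda>t. g (d x y - t)) ` {0..d y x} = g ` {0..d x y}"
proof -
  interpret Metric_space M d by fact
  have c: "d y x = d x y" using commute by simp
  have iso: "\<forall>s\<in>{0..d x y}. \<forall>t\<in>{0..d x y}. d (g s) (g t) = \<bar>s - t\<bar>"
    and e: "g 0 = x" "g (d x y) = y" "g ` {0..d x y} \<subseteq> M"
    using assms(2) unfolding geodesic_seg_def by blast+
  have im: "(\<lambda>t. g (d x y - t)) ` {0..d x y} = g ` {0..d x y}"
  proof
    show "(\<lambda>t. g (d x y - t)) ` {0..d x y} \<subseteq> g ` {0..d x y}" by auto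
    show "g ` {0..d x y} \<subseteq> (\<lambda>t. g (d x y - t)) ` {0..d x y}"
    proof
      fix u assume "u \<in> g ` {0..d x y}"
      then obtain s where s: "s \<in> {0..d x y}" "u = g s" by auto
      then have "d x y - s \<in> {0..d x y}" "u = g (d x y - (d x y - s))" by auto
      then show "u \<in> (\<lambda>t. g (d x y - t)) ` {0..d x y}" by blast
    qed
  qed
  then show "(\<lambda>t. g (d x y - t)) ` {0..d y x} = g ` {0..d x y}" using c by simp
  show "geodesic_seg M d (\<lambda>t. g (d x y - t)) y x"
    unfolding geodesic_seg_def c
  proof (intro conjI ballI)
    show "g (d x y - 0) = y" "g (d x y - d x y) = x" using e by auto
    show "(\<lambda>t. g (d x y - t)) ` {0..d x y} \<subseteq> M" using im e by simp
    fix s t assume "s \<in> {0..d x y}" "t \<in> {0..d x y}"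
    then show "d (g (d x y - s)) (g (d x y - t)) = \<bar>s - t\<bar>" using iso
      by (subst bspec[OF bspec[OF iso]]) auto
  qed
qed

lemma seg_M: "geodesic_seg M d g x y \<Longrightarrow> p \<in> g ` {0..d x y} \<Longrightarrow> p \<in> M"
  unfolding geodesic_seg_def by auto

lemma slim_chain:
  assumes ms: "Metric_space M d" and hyp: "delta_hyperbolic M d \<delta>"
    and GG: "\<forall>x\<in>M. \<forall>y\<in>M. geodesic_seg M d (G x y) x y" and dp: "\<delta> \<ge> 0"
  shows "\<forall>(x::nat \<Rightarrow> 'a) (n::nat). (\<forall>i\<le>n. x i \<in> M) \<and> 1 \<le> n \<and> n \<le> 2^k \<longrightarrow>
     (\<forall>p\<in>G (x 0) (x n) ` {0..d (x 0) (x n)}. \<exists>i<n. \<exists>z\<in>G (x i) (x (Suc i)) ` {0..d (x i) (x (Suc i))}.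
        d p z \<le> real k * \<delta>)"
proof (induction k)
  case 0
  show ?case
  proof (intro allI impI ballI)
    fix x and n :: nat and p assume h: "(\<forall>i\<le>n. x i \<in> M) \<and> 1 \<le> n \<and> n \<le> 2^0" and p: "p \<in> G (x 0) (x n) ` {0..d (x 0) (x n)}"
    have n: "n = 1" using h by simp
    have pM: "p \<in> M" using seg_M[OF GG[rule_format, of "x 0" "x n"] p] h by simp
    show "\<exists>i<n. \<exists>z\<in>G (x i) (x (Suc i)) ` {0..d (x i) (x (Suc i))}. d p z \<le> real 0 * \<delta>"
    proof -
      have "d p p = 0" using pM Metric_space.zero[OF ms] by simp
      moreover have "p \<in> G (x 0) (x (Suc 0)) ` {0..d (x 0) (x (Suc 0))}" using p n by simp
      ultimately show ?thesis using n by (intro exI[of _ 0] conjI bexI[of _ p]) auto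
    qed
  qed
next
  case (Suc k)
  interpret Metric_space M d by fact
  show ?case
  proof (intro allI impI ballI)
    fix x and n :: nat and p assume h: "(\<forall>i\<le>n. x i \<in> M) \<and> 1 \<le> n \<and> n \<le> 2^Suc k" and p: "p \<in> G (x 0) (x n) ` {0..d (x 0) (x n)}"
    have pM: "p \<in> M" using seg_M[OF GG[rule_format, of "x 0" "x n"] p] h by simp
    show "\<exists>i<n. \<exists>z\<in>G (x i) (x (Suc i)) ` {0..d (x i) (x (Suc i))}. d p z \<le> real (Suc k) * \<delta>"
    proof (cases "n = 1")
      case True
      have "d p p = 0" using pM by simp
      moreover have "p \<in> G (x 0) (x (Suc 0)) ` {0..d (x 0) (x (Suc 0))}" using p True by simp
      moreover have "0 \<le> real (Suc k) * \<delta>" using dp by simp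
      ultimately show ?thesis using True by (intro exI[of _ 0] conjI bexI[of _ p]) auto
    next
      case False
      define m where "m = n div 2"
      have n2: "n \<le> 2 * 2^k" "2 \<le> n" using h False by auto
      have m: "1 \<le> m" "m \<le> 2^k" "n - m \<le> 2^k" "m < n"
      proof -
        obtain K where K: "K = (2::nat)^k" by blast
        have "n \<le> 2 * K" "2 \<le> n" using n2 K by auto
        then have "1 \<le> m \<and> m \<le> K \<and> n - m \<le> K \<and> m < n" unfolding m_def by presburger
        then show "1 \<le> m" "m \<le> 2^k" "n - m \<le> 2^k" "m < n" using K by auto
      qed
      have xM: "x 0 \<in> M" "x n \<in> M" "x m \<in> M" using h m(4) by auto
      have g1: "geodesic_seg M d (G (x 0) (x n)) (x 0) (x n)" using GG xM by simp
      have g2: "geodesic_seg M d (G (x 0) (x m)) (x 0) (x m)" using GG xM by simp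
      have g3: "geodesic_seg M d (G (x m) (x n)) (x m) (x n)" using GG xM by simp
      obtain w where w: "w \<in> (\<lambda>t. G (x m) (x n) (d (x m) (x n) - t)) ` {0..d (x n) (x m)} \<union> G (x 0) (x m) ` {0..d (x 0) (x m)}"
          "d p w \<le> \<delta>"
        using hyp_use[OF hyp xM(1,2,3) g1 geo_rev(1)[OF ms g3] g2 p] by blast
      then have w': "w \<in> G (x m) (x n) ` {0..d (x m) (x n)} \<union> G (x 0) (x m) ` {0..d (x 0) (x m)}"
        using geo_rev(2)[OF ms g3] by simp
      then show ?thesis
      proof
        assume wA: "w \<in> G (x 0) (x m) ` {0..d (x 0) (x m)}"
        have wM: "w \<in> M" using seg_M[OF g2 wA] .
        obtain i z where iz: "i < m" "z \<in> G (x i) (x (Suc i)) ` {0..d (x i) (x (Suc i))}" "d w z \<le> real k * \<delta>"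
          using Suc.IH[rule_format, of m x w] h m wA by auto
        have "x i \<in> M" "x (Suc i) \<in> M" using h iz m by auto
        then have zM: "z \<in> M" using iz(2) GG seg_M by metis
        have "d p z \<le> d p w + d w z" using triangle[of p w z] pM wM zM by simp
        then have "d p z \<le> real (Suc k) * \<delta>" using iz(3) w(2) by (simp add: algebra_simps)
        then show ?thesis using iz m by (intro exI[of _ i] conjI bexI[of _ z]) auto
      next
        assume wB: "w \<in> G (x m) (x n) ` {0..d (x m) (x n)}"
        have wM: "w \<in> M" using seg_M[OF g3 wB] .
        have e: "x (m + (n - m)) = x n" "x (m + 0) = x m" using m by auto
        have pre: "(\<forall>i\<le>n - m. x (m+i) \<in> M) \<and> 1 \<le> n - m \<and> n - m \<le> 2^k" using h m by auto
        have wB': "w \<in> G (x (m+0)) (x (m + (n - m))) ` {0..d (x (m+0)) (x (m + (n - m)))}" using wB e by simp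
        have "\<exists>i<n - m. \<exists>z\<in>G (x (m+i)) (x (m + Suc i)) ` {0..d (x (m+i)) (x (m + Suc i))}. d w z \<le> real k * \<delta>"
          using Suc.IH[rule_format, of "n - m" "\<lambda>i. x (m+i)", OF pre wB'] by simp
        then obtain i z where iz: "i < n - m" "z \<in> G (x (m+i)) (x (Suc (m+i))) ` {0..d (x (m+i)) (x (Suc (m+i)))}" "d w z \<le> real k * \<delta>"
          by auto
        have "x (m+i) \<in> M" "x (Suc (m+i)) \<in> M" using h iz m by auto
        then have zM: "z \<in> M" using iz(2) GG seg_M by metis
        have "d p z \<le> d p w + d w z" using triangle[of p w z] pM wM zM by simp
        then have "d p z \<le> real (Suc k) * \<delta>" using iz(3) w(2) by (simp add: algebra_simps)
        then show ?thesis using iz m by (intro exI[of _ "m+i"] conjI bexI[of _ z]) auto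
      qed
    qed
  qed
qed

lemma chain_sum:
  assumes ms: "Metric_space M d" and yM: "\<forall>i\<le>N. y i \<in> M"
  shows "a \<le> b \<Longrightarrow> b \<le> N \<Longrightarrow> d (y a) (y b) \<le> (\<Sum>i<b. d (y i) (y (Suc i))) - (\<Sum>i<a. d (y i) (y (Suc i)))"
proof (induction b)
  case 0
  then show ?case using yM Metric_space.zero[OF ms, of "y 0" "y 0"] by simp
next
  case (Suc b)
  show ?case
  proof (cases "a = Suc b")
    case True
    then show ?thesis using yM Suc.prems Metric_space.zero[OF ms, of "y (Suc b)" "y (Suc b)"] by simp
  next
    case False
    then have ab: "a \<le> b" using Suc.prems by simp
    have "d (y a) (y (Suc b)) \<le> d (y a) (y b) + d (y b) (y (Suc b))"
      using Metric_space.triangle[OF ms, of "y a" "y b" "y (Suc b)"] yM ab Suc.prems by simp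
    then show ?thesis using Suc.IH[OF ab] Suc.prems by simp
  qed
qed

lemma main_bound:
  assumes dpos: "\<delta> > 0" and ms: "Metric_space M d" and geo: "geodesic_mspace M d"
    and hyp: "delta_hyperbolic M d \<delta>" and ray: "geodesic_ray M d \<gamma>"
    and pS: "p \<in> horosphere M d \<gamma> b0" and qS: "q \<in> horosphere M d \<gamma> b0"
    and cp: "mpath M d c" and c0: "c 0 = p" and c1: "c 1 = q"
    and cim: "c ` {0..1} \<subseteq> M - horoball M d \<gamma> b0"
  shows "ereal (2 powr ((d p q - (6*\<delta>+4) - 2) / (2 * \<delta>)) - (6*\<delta>+4)) \<le> mpath_length d c"
proof -
  interpret Metric_space M d by fact
  define D where "D = d p q"
  have pM: "p \<in> M" and bp: "busemann d \<gamma> p = b0" using pS unfolding horosphere_def by auto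
  have qM: "q \<in> M" and bq: "busemann d \<gamma> q = b0" using qS unfolding horosphere_def by auto
  have cMB: "c t \<in> M - horoball M d \<gamma> b0" if "t \<in> {0..1}" for t using cim that by blast
  have cM: "\<And>t. t \<in> {0..1} \<Longrightarrow> c t \<in> M" using cMB by simp
  have cB: "\<And>t. t \<in> {0..1} \<Longrightarrow> b0 \<le> busemann d \<gamma> (c t)"
  proof -
    fix t :: real assume t: "t \<in> {0..1}"
    then have "c t \<in> M" "c t \<notin> horoball M d \<gamma> b0" using cMB by auto
    then show "b0 \<le> busemann d \<gamma> (c t)" unfolding horoball_def by simp
  qed
  define G where "G = (\<lambda>x y. SOME g. geodesic_seg M d g x y)"
  have GG: "\<forall>x\<in>M. \<forall>y\<in>M. geodesic_seg M d (G x y) x y"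
  proof (intro ballI)
    fix x y assume xy: "x \<in> M" "y \<in> M"
    have "\<exists>g. geodesic_seg M d g x y" using geo[unfolded geodesic_mspace_def, rule_format, OF xy] .
    then show "geodesic_seg M d (G x y) x y" unfolding G_def by (rule someI_ex)
  qed
  define mm where "mm = G p q (D/2)"
  have gpq: "geodesic_seg M d (G p q) p q" using GG pM qM by blast
  have bm: "busemann d \<gamma> mm \<le> b0 - D/2 + 2*\<delta>"
    using busemann_mid[OF ms ray hyp geo pM qM gpq bp bq] unfolding mm_def D_def .
  have mmseg: "mm \<in> G p q ` {0..d p q}" unfolding mm_def D_def by auto
  have mmM: "mm \<in> M" using seg_M[OF gpq mmseg] .
  obtain \<eta> where eta: "\<eta> > 0" "\<forall>x\<in>{0..1}. \<forall>y\<in>{0..1}. dist y x < \<eta> \<longrightarrow> d (c y) (c x) < 1"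
    using unif_cont[OF ms cp[unfolded mpath_def]] by blast
  obtain N :: nat where N: "1 / \<eta> < real N" using reals_Archimedean2 by blast
  have N1: "N \<ge> 1" using N eta(1) by (cases N) (auto simp: field_simps)
  have Neta: "1 / real N < \<eta>" using N eta(1) N1 by (simp add: field_simps)
  define tt where "tt = (\<lambda>i::nat. real i / real N)"
  define y where "y = (\<lambda>i. c (tt i))"
  have tt01: "\<And>i. i \<le> N \<Longrightarrow> tt i \<in> {0..1}" unfolding tt_def using N1 by (auto simp: field_simps)
  have yM: "\<forall>i\<le>N. y i \<in> M" using cM tt01 unfolding y_def by blast
  have y0: "y 0 = p" and yN: "y N = q" using c0 c1 N1 unfolding y_def tt_def by auto
  have chord: "d (y i) (y (Suc i)) < 1" if i: "i < N" for i
  proof -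
    have "dist (tt (Suc i)) (tt i) = 1 / real N" unfolding tt_def dist_real_def using N1
      by (simp add: field_simps)
    then have "d (c (tt (Suc i))) (c (tt i)) < 1" using eta(2) tt01[of i] tt01[of "Suc i"] i Neta by auto
    then show ?thesis unfolding y_def using commute by simp
  qed
  define S where "S = (\<lambda>j. \<Sum>i<j. d (y i) (y (Suc i)))"
  define \<Sigma> where "\<Sigma> = S N"
  have dyS: "d (y a) (y b) \<le> S b - S a" if "a \<le> b" "b \<le> N" for a b
    using chain_sum[OF ms yM that] unfolding S_def .
  have Smono: "S a \<le> S b" if "a \<le> b" "b \<le> N" for a b
    using dyS[OF that] nonneg[of "y a" "y b"] by linarith
  have Ssuc: "S (Suc j) = S j + d (y j) (y (Suc j))" for j unfolding S_def by simp
  have S0: "S 0 = 0" unfolding S_def by simp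
  have Sig0: "\<Sigma> \<ge> 0" using Smono[of 0 N] S0 unfolding \<Sigma>_def by simp
  have len: "ereal \<Sigma> \<le> mpath_length d c"
  proof -
    have mem: "(N, tt) \<in> {(n, t). t 0 = (0::real) \<and> t n = 1 \<and> (\<forall>i<n. t i \<le> t (Suc i))}"
      using N1 unfolding tt_def by (auto simp: field_simps)
    have eq: "(\<lambda>(n, t). ereal (\<Sum>i<n. d (c (t i)) (c (t (Suc i))))) (N, tt) = ereal \<Sigma>"
      unfolding \<Sigma>_def S_def y_def by simp
    show ?thesis unfolding mpath_length_def using SUP_upper[OF mem, of "\<lambda>(n, t). ereal (\<Sum>i<n. d (c (t i)) (c (t (Suc i))))"] eq by simp
  qed
  define R where "R = nat \<lfloor>\<Sigma>\<rfloor>"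
  have R: "real R \<le> \<Sigma>" "\<Sigma> < real R + 1" unfolding R_def using Sig0
    by (simp_all add: of_nat_nat)
  define P where "P = (\<lambda>r j. real r \<le> S j \<or> j = N)"
  define idx where "idx = (\<lambda>r. LEAST j. P r j)"
  have idx_le: "idx r \<le> N" for r unfolding idx_def by (rule Least_le) (simp add: P_def)
  have idx_P: "real r \<le> S (idx r) \<or> idx r = N" for r
    using LeastI[of "P r" N] unfolding idx_def P_def by simp
  have idx_up: "S (idx r) < real r + 1" for r
  proof (cases "idx r = 0")
    case True then show ?thesis using S0 by simp
  next
    case False
    define j where "j = idx r - 1"
    have j: "j < idx r" "Suc j = idx r" using False unfolding j_def by auto
    have "\<not> P r j" using not_less_Least[of j "P r"] j(1) unfolding idx_def by blast
    then have "S j < real r" "j < N" using idx_le[of r] j unfolding P_def by auto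
    moreover have "S (idx r) = S j + d (y j) (y (Suc j))" using Ssuc[of j] j(2) by simp
    ultimately show ?thesis using chord[of j] by linarith
  qed
  have idx_low: "real r - 1 \<le> S (idx r)" if "r \<le> R + 1" for r
    using idx_P[of r] R that unfolding \<Sigma>_def by auto
  have idx0: "idx 0 = 0"
  proof -
    have "idx 0 \<le> 0" unfolding idx_def by (rule Least_le) (simp add: P_def S0)
    then show ?thesis by simp
  qed
  have idxn: "idx (R+1) = N"
  proof -
    have "S (idx (R+1)) \<le> \<Sigma>" using Smono[OF idx_le order_refl] unfolding \<Sigma>_def .
    then show ?thesis using idx_P[of "R+1"] R by auto
  qed
  define n where "n = R + 1"
  define x where "x = (\<lambda>r. y (idx r))"
  have xM: "\<forall>i\<le>n. x i \<in> M" using yM idx_le unfolding x_def by blast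
  have x0: "x 0 = p" and xn: "x n = q" unfolding x_def n_def using idx0 idxn y0 yN by auto
  have xchord: "d (x i) (x (Suc i)) \<le> 3" if i: "i < n" for i
  proof (cases "idx i \<le> idx (Suc i)")
    case True
    then have "d (x i) (x (Suc i)) \<le> S (idx (Suc i)) - S (idx i)"
      unfolding x_def using dyS idx_le by blast
    moreover have "S (idx (Suc i)) < real i + 2" using idx_up[of "Suc i"] by simp
    moreover have "real i - 1 \<le> S (idx i)" using idx_low[of i] i unfolding n_def by simp
    ultimately show ?thesis by linarith
  next
    case False
    then have "d (x (Suc i)) (x i) \<le> S (idx i) - S (idx (Suc i))"
      unfolding x_def using dyS idx_le by simp
    moreover have "S (idx i) < real i + 1" using idx_up[of i] by simp
    moreover have "real (Suc i) - 1 \<le> S (idx (Suc i))" using idx_low[of "Suc i"] i unfolding n_def by simp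
    ultimately show ?thesis using commute by simp
  qed
  define k where "k = (LEAST k. n \<le> 2^k)"
  have hk: "n \<le> 2^k" unfolding k_def by (rule LeastI[of _ n]) (simp add: less_imp_le)
  have hk2: "2^k < 2*n"
  proof (cases k)
    case 0 then show ?thesis unfolding n_def by simp
  next
    case (Suc k')
    have "\<not> n \<le> 2^k'" using not_less_Least[of k' "\<lambda>k. n \<le> 2^k"] Suc unfolding k_def by simp
    then show ?thesis using Suc by simp
  qed
  have n1: "1 \<le> n" unfolding n_def by simp
  have "\<exists>i<n. \<exists>z\<in>G (x i) (x (Suc i)) ` {0..d (x i) (x (Suc i))}. d mm z \<le> real k * \<delta>"
    using slim_chain[OF ms hyp GG less_imp_le[OF dpos], of k, rule_format, of n x mm] xM n1 hk mmseg x0 xn by simp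
  then obtain i z where iz: "i < n" "z \<in> G (x i) (x (Suc i)) ` {0..d (x i) (x (Suc i))}" "d mm z \<le> real k * \<delta>"
    by blast
  have xiM: "x i \<in> M" "x (Suc i) \<in> M" using xM iz(1) by auto
  have gi: "geodesic_seg M d (G (x i) (x (Suc i))) (x i) (x (Suc i))" using GG xiM by blast
  obtain s where s: "s \<in> {0..d (x i) (x (Suc i))}" "z = G (x i) (x (Suc i)) s" using iz(2) by blast
  have zf: "z \<in> M" "d (x i) z = s" using geo_facts[OF gi s(1)] s(2) by auto
  have dzx: "d z (x i) \<le> 3" using zf s(1) xchord[OF iz(1)] commute by simp
  have bxi: "b0 \<le> busemann d \<gamma> (x i)" unfolding x_def y_def using cB tt01 idx_le by blast
  have "busemann d \<gamma> (x i) \<le> busemann d \<gamma> mm + d mm (x i)" using busemann_lip[OF ms ray mmM xiM(1)] .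
  moreover have "d mm (x i) \<le> d mm z + d z (x i)" using triangle[of mm z "x i"] mmM zf xiM by simp
  ultimately have "D/2 \<le> 2*\<delta> + real k * \<delta> + 3" using bm bxi iz(3) dzx by linarith
  then have ek: "(D - 4*\<delta> - 6) / (2*\<delta>) \<le> real k" using dpos by (simp add: field_simps)
  have "2 powr ((D - 4*\<delta> - 6) / (2*\<delta>)) \<le> 2 powr (real k)" using ek by (rule powr_mono) simp
  also have "\<dots> = 2^k" by (simp add: powr_realpow)
  also have "\<dots> < 2 * real n" using hk2 by (metis of_nat_less_iff of_nat_mult of_nat_numeral of_nat_power)
  finally have A: "2 powr ((D - 4*\<delta> - 6) / (2*\<delta>)) < 2 * \<Sigma> + 2" using R unfolding n_def by simp
  have "(D - (6*\<delta>+4) - 2) / (2 * \<delta>) = (D - 4*\<delta> - 6) / (2*\<delta>) - 1" using dpos by (simp add: field_simps)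
  then have "2 powr ((D - (6*\<delta>+4) - 2) / (2 * \<delta>)) = 2 powr ((D - 4*\<delta> - 6) / (2*\<delta>)) / 2"
    by (simp add: powr_diff)
  then have "2 powr ((D - (6*\<delta>+4) - 2) / (2 * \<delta>)) - (6*\<delta>+4) \<le> \<Sigma>" using A dpos by simp
  then have "ereal (2 powr ((D - (6*\<delta>+4) - 2) / (2 * \<delta>)) - (6*\<delta>+4)) \<le> ereal \<Sigma>" by simp
  then show ?thesis using len unfolding D_def by (rule order_trans)
qed

theorem lemma2p2:
  fixes \<delta> :: real
  assumes "\<delta> > 0"
  shows "\<exists>C::real. \<forall>(M :: 'a set) d \<gamma> b0 p q c.
     Metric_space M d \<and> proper_mspace M d \<and> geodesic_mspace M d \<and> delta_hyperbolic M d \<delta> \<and>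
     geodesic_ray M d \<gamma> \<and>
     p \<in> horosphere M d \<gamma> b0 \<and> q \<in> horosphere M d \<gamma> b0 \<and>
     mpath M d c \<and> c 0 = p \<and> c 1 = q \<and> c ` {0..1} \<subseteq> M - horoball M d \<gamma> b0
     \<longrightarrow> mpath_length d c \<ge> ereal (2 powr ((d p q - C - 2) / (2 * \<delta>)) - C)"
proof (intro exI[of _ "6*\<delta>+4"] allI impI)
  fix M :: "'a set" and d \<gamma> b0 p q c
  assume h: "Metric_space M d \<and> proper_mspace M d \<and> geodesic_mspace M d \<and> delta_hyperbolic M d \<delta> \<and>
     geodesic_ray M d \<gamma> \<and>
     p \<in> horosphere M d \<gamma> b0 \<and> q \<in> horosphere M d \<gamma> b0 \<and>
     mpath M d c \<and> c 0 = p \<and> c 1 = q \<and> c ` {0..1} \<subseteq> M - horoball M d \<gamma> b0"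
  show "mpath_length d c \<ge> ereal (2 powr ((d p q - (6*\<delta>+4) - 2) / (2 * \<delta>)) - (6*\<delta>+4))"
    using main_bound[OF assms, of M d \<gamma> p b0 q c] h by simp
qed

end
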